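(* Let $f:[0,1]\to\mathbb R$, $f(x)=x\log^2 x$ (with $f(0)=0$), and $\varphi(x)=\sqrt{x(1-x)}$. Then the second-order Ditzian–Totik modulus of smoothness satisfies $\omega^2_\varphi(f,t)=\mathcal O\big(t^2\log(1/t)\big)$ as $t\to0^+$.
   Context: For a continuous $f:[0,1]\to\mathbb R$ and $t>0$, $\omega^2_\varphi(f,t)=\sup\big\{|f(u)+f(v)-2f(\tfrac{u+v}{2})| : (u,v)\in[0,1]^2,\ |u-v|\le 2t\,\varphi(\tfrac{u+v}{2})\big\}$. *)

theory Defs
  imports "HOL-Analysis.Analysis" "HOL-Library.Landau_Symbols"
begin

definition dt_modulus2 :: "(real \<Rightarrow> real) \<Rightarrow> (real \<Rightarrow> real) \<Rightarrow> real \<Rightarrow> real" where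
  "dt_modulus2 f \<phi> t = Sup {\<bar>f u + f v - 2 * f ((u + v) / 2)\<bar> | u v.
      u \<in> {0..1} \<and> v \<in> {0..1} \<and> \<bar>u - v\<bar> \<le> 2 * t * \<phi> ((u + v) / 2)}"

end

theory Submission
  imports Defs
begin


lemma ln_lower: "0 < x \<Longrightarrow> 1 - 1/x \<le> ln (x::real)"
  using ln_le_minus_one[of "1/x"] by (simp add: ln_div)

lemma D1_bounds:
  fixes r :: real assumes "0 \<le> r" "r \<le> 1"
  shows "0 \<le> (1-r)*ln(1-r) + (1+r)*ln(1+r)" "(1-r)*ln(1-r) + (1+r)*ln(1+r) \<le> 2*r^2"
proof -
  have b1: "(1+r)*ln(1+r) \<le> (1+r)*r" using ln_le_minus_one[of "1+r"] assms
    by (intro mult_left_mono) auto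
  have b2: "r \<le> (1+r)*ln(1+r)"
  proof -
    have "(1+r)*(1 - 1/(1+r)) \<le> (1+r)*ln(1+r)" using ln_lower[of "1+r"] assms
      by (intro mult_left_mono) auto
    moreover have "(1+r)*(1 - 1/(1+r)) = r" using assms by (simp add: field_simps)
    ultimately show ?thesis by simp
  qed
  have a: "-r \<le> (1-r)*ln(1-r) \<and> (1-r)*ln(1-r) \<le> -(1-r)*r"
  proof (cases "r = 1")
    case True then show ?thesis by simp
  next
    case False
    then have p: "0 < 1 - r" using assms by simp
    have "(1-r)*ln(1-r) \<le> (1-r)*(-r)" using ln_le_minus_one[of "1-r"] p
      by (intro mult_left_mono) auto
    moreover have "(1-r)*(1 - 1/(1-r)) \<le> (1-r)*ln(1-r)" using ln_lower[of "1-r"] p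
      by (intro mult_left_mono) auto
    moreover have "(1-r)*(1 - 1/(1-r)) = -r" using p by (simp add: field_simps)
    ultimately show ?thesis by (simp add: algebra_simps)
  qed
  show "0 \<le> (1-r)*ln(1-r) + (1+r)*ln(1+r)" using a b2 by linarith
  show "(1-r)*ln(1-r) + (1+r)*ln(1+r) \<le> 2*r^2" using a b1 by (simp add: power2_eq_square algebra_simps)
qed

lemma sln2: fixes s :: real assumes "0 \<le> s" "s \<le> 1" shows "s * (ln s)^2 \<le> 4*(1-s)^2"
proof (cases "s = 0")
  case True then show ?thesis by simp
next
  case False
  then have sp: "0 < s" using assms by simp
  have q0: "0 < sqrt s" "sqrt s \<le> 1" using sp assms by auto
  have "sqrt s * sqrt s \<le> 1 * sqrt s" using q0 by (intro mult_right_mono) auto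
  then have q: "0 < sqrt s" "sqrt s \<le> 1" "s \<le> sqrt s" using q0 sp by auto
  have lns: "ln s = 2 * ln (sqrt s)" using sp by (simp add: ln_sqrt)
  have "1 - 1/sqrt s \<le> ln (sqrt s)" using ln_lower q by simp
  have nn: "0 \<le> - ln s" using sp assms by simp
  have "- ln s \<le> 2*(1/sqrt s - 1)" using lns \<open>1 - 1/sqrt s \<le> ln (sqrt s)\<close> by (smt (verit))
  then have "(ln s)^2 \<le> (2*(1/sqrt s - 1))^2"
    using nn power_mono[of "-ln s" "2*(1/sqrt s - 1)" 2] by simp
  then have "s*(ln s)^2 \<le> s*(2*(1/sqrt s - 1))^2" using sp by (intro mult_left_mono) auto
  also have "s*(2*(1/sqrt s - 1))^2 = 4*(1 - sqrt s)^2"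
    using q sp by (simp add: power2_eq_square field_simps)
  also have "\<dots> \<le> 4*(1-s)^2" using q by (intro mult_left_mono power_mono) auto
  finally show ?thesis .
qed

lemma ln_inv_ge1: fixes t :: real assumes "0 < t" "t \<le> 1/3" shows "1 \<le> ln (1/t)"
proof -
  have "t * exp 1 \<le> (1/3) * 3" using exp_le assms by (intro mult_mono) auto
  then have "exp 1 \<le> 1/t" using assms by (simp add: field_simps)
  then show ?thesis using ln_le_cancel_iff[of "exp 1" "1/t"] assms by simp
qed

lemma scale_g: fixes m y :: real assumes "0 < m" "0 \<le> y"
  shows "(m*y) * (ln (m*y))^2 = m * (y * (ln m + ln y)^2)"
proof (cases "y = 0")
  case False then show ?thesis using assms by (simp add: ln_mult)
qed simp

lemma key:
  fixes u v t :: real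
  assumes u: "0 \<le> u" "u \<le> 1" and v: "0 \<le> v" "v \<le> 1" and t: "0 < t" "t \<le> 1/3"
    and c: "\<bar>u - v\<bar> \<le> 2 * t * sqrt ((u+v)/2 * (1 - (u+v)/2))"
  shows "\<bar>u * (ln u)^2 + v * (ln v)^2 - 2 * (((u+v)/2) * (ln ((u+v)/2))^2)\<bar> \<le> 18 * (t^2 * ln (1/t))"
proof -
  define m where "m = (u+v)/2"
  define h where "h = \<bar>v - u\<bar>/2"
  define g :: "real \<Rightarrow> real" where "g x = x*(ln x)^2" for x
  have lt: "1 \<le> ln (1/t)" using ln_inv_ge1 t by simp
  have rhs0: "0 \<le> 18 * (t^2 * ln (1/t))" using lt by simp
  have m01: "0 \<le> m" "m \<le> 1" using u v by (auto simp: m_def)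
  have uv: "g u + g v = g (m - h) + g (m + h)"
    by (cases "u \<le> v") (auto simp: m_def h_def field_simps)
  have hm: "0 \<le> h" "h \<le> m" using u v by (auto simp: m_def h_def)
  have h2: "h^2 \<le> t^2 * m"
  proof -
    have "2*h \<le> 2 * t * sqrt (m * (1 - m))" using c by (simp add: m_def h_def abs_minus_commute)
    then have a: "h \<le> t * sqrt (m*(1-m))" by simp
    have "h^2 \<le> (t * sqrt (m*(1-m)))^2" using a hm by (intro power_mono) auto
    also have "\<dots> = t^2 * (m*(1-m))" using m01 by (simp add: power_mult_distrib)
    also have "\<dots> \<le> t^2 * m" using m01 by (intro mult_left_mono) (auto simp: mult_left_le)
    finally show ?thesis .
  qed
  show ?thesis
  proof (cases "m = 0")
    case True
    then have "u = 0" "v = 0" using u v by (auto simp: m_def)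
    then show ?thesis using rhs0 by simp
  next
    case False
    then have mp: "0 < m" using m01 by simp
    define r where "r = h / m"
    have r01: "0 \<le> r" "r \<le> 1" using hm mp by (auto simp: r_def)
    have e1: "m - h = m * (1 - r)" "m + h = m * (1 + r)" using mp by (auto simp: r_def field_simps)
    define L where "L = ln m"
    define D1 where "D1 = (1-r)*ln(1-r) + (1+r)*ln(1+r)"
    define D2 where "D2 = (1-r)*(ln(1-r))^2 + (1+r)*(ln(1+r))^2"
    have gm: "g m = m * (1 * (L + ln 1)^2)" using scale_g[of m 1] mp by (simp add: g_def L_def)
    have "g (m - h) + g (m + h) - 2 * g m
        = m * ((1-r)*(L + ln(1-r))^2 + (1+r)*(L+ln(1+r))^2 - 2*L^2)"
    proof -
      have A: "g (m - h) = m * ((1-r)*(L + ln(1-r))^2)"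
        unfolding e1 g_def L_def using scale_g[of m "1-r"] r01 mp by simp
      have B: "g (m + h) = m * ((1+r)*(L + ln(1+r))^2)"
        unfolding e1 g_def L_def using scale_g[of m "1+r"] r01 mp by simp
      show ?thesis unfolding A B gm by (simp add: algebra_simps)
    qed
    also have "\<dots> = m * (2*L*D1 + D2)"
      by (simp add: D1_def D2_def power2_eq_square algebra_simps)
    finally have eq: "g (m - h) + g (m + h) - 2 * g m = m * (2*L*D1 + D2)" .
    have d1: "0 \<le> D1" "D1 \<le> 2*r^2" using D1_bounds r01 by (auto simp: D1_def)
    have "(1+r)*(ln(1+r))^2 \<le> 2*r^2"
    proof -
      have "0 \<le> ln(1+r)" "ln(1+r) \<le> r" using r01 ln_le_minus_one[of "1+r"] by auto
      then have "(ln(1+r))^2 \<le> r^2" by (intro power_mono) auto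
      then have "(1+r)*(ln(1+r))^2 \<le> (1+r)*r^2" using r01 by (intro mult_left_mono) auto
      also have "\<dots> \<le> 2*r^2" using r01 by (intro mult_right_mono) auto
      finally show ?thesis .
    qed
    moreover have "(1-r)*(ln(1-r))^2 \<le> 4*r^2" using sln2[of "1-r"] r01 by simp
    ultimately have d2: "0 \<le> D2" "D2 \<le> 6*r^2" unfolding D2_def using r01 by auto
    have Lneg: "L \<le> 0" using mp m01 by (simp add: L_def)
    have abs1: "\<bar>m * (2*L*D1 + D2)\<bar> \<le> m * (4*(-L)*r^2 + 6*r^2)"
    proof -
      have "-L*D1 \<le> -L*(2*r^2)" using Lneg d1 by (intro mult_left_mono) auto
      moreover have "L*D1 \<le> 0" using Lneg d1 mult_nonpos_nonneg by auto
      ultimately have "\<bar>2*L*D1 + D2\<bar> \<le> 4*(-L)*r^2 + 6*r^2" using d2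
        by (simp add: abs_le_iff)
      then show ?thesis using mp by (simp add: abs_mult)
    qed
    have Lb: "-L \<le> 2 * ln (1/t) + t^2/m"
    proof -
      have "ln (t^2/m) \<le> t^2/m - 1" using ln_le_minus_one t mp by simp
      moreover have "ln (t^2/m) = 2 * ln t - L" using t mp by (simp add: L_def ln_div ln_mult power2_eq_square)
      moreover have "ln (1/t) = - ln t" using t by (simp add: ln_div)
      ultimately show ?thesis by linarith
    qed
    define X where "X = h^2/m"
    define Y where "Y = h^2/m^2"
    have X: "0 \<le> X" "X \<le> t^2" using h2 mp by (auto simp: X_def field_simps)
    have Y: "0 \<le> Y" "Y \<le> 1" using hm mp by (auto simp: Y_def field_simps intro!: power_mono)
    have "m * (4*(-L)*r^2 + 6*r^2) = 4*(-L)*X + 6*X" using mp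
      by (simp add: X_def r_def power2_eq_square field_simps)
    also have "\<dots> \<le> 4*(2 * ln (1/t) + t^2/m)*X + 6*X" using Lb X by (intro add_right_mono mult_right_mono) auto
    also have "\<dots> = 8*ln(1/t)*X + 4*t^2*Y + 6*X" using mp by (simp add: X_def Y_def power2_eq_square field_simps)
    also have "\<dots> \<le> 8*ln(1/t)*t^2 + 4*t^2*1 + 6*t^2"
      using X Y lt by (intro add_mono mult_left_mono) auto
    also have "\<dots> \<le> 18 * (t^2 * ln (1/t))"
    proof -
      have "t^2*1 \<le> t^2*ln(1/t)" using lt by (intro mult_left_mono) auto
      then show ?thesis by (simp add: algebra_simps)
    qed
    finally have fin: "m * (4*(-L)*r^2 + 6*r^2) \<le> 18 * (t^2 * ln (1/t))" .
    have "\<bar>g u + g v - 2 * g m\<bar> \<le> 18 * (t^2 * ln (1/t))"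
    proof -
      have "g u + g v - 2 * g m = m * (2*L*D1 + D2)" using uv eq by linarith
      then show ?thesis using abs1 fin by linarith
    qed
    then show ?thesis by (simp only: g_def m_def)
  qed
qed


lemma pointwise_bound:
  fixes f \<phi> :: "real \<Rightarrow> real" and t :: real
  assumes f: "\<And>x. f x = (if x = 0 then 0 else x * (ln x)\<^sup>2)"
      and ph: "\<And>x. \<phi> x = sqrt (x * (1 - x))"
      and t: "0 < t" "t \<le> 1/3"
  shows "\<bar>dt_modulus2 f \<phi> t\<bar> \<le> 18 * \<bar>t\<^sup>2 * ln (1 / t)\<bar>"
proof -
  have f': "f x = x * (ln x)^2" for x using f[of x] by simp
  define S where "S = {\<bar>f u + f v - 2 * f ((u + v) / 2)\<bar> | u v.
      u \<in> {0..1} \<and> v \<in> {0..1} \<and> \<bar>u - v\<bar> \<le> 2 * t * \<phi> ((u + v) / 2)}"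
  have lt: "1 \<le> ln (1/t)" using ln_inv_ge1 t by simp
  have B: "y \<le> 18 * (t^2 * ln (1/t))" if "y \<in> S" for y
  proof -
    obtain u v where y: "y = \<bar>f u + f v - 2 * f ((u + v) / 2)\<bar>" and
      uv: "u \<in> {0..1}" "v \<in> {0..1}" "\<bar>u - v\<bar> \<le> 2 * t * \<phi> ((u + v) / 2)"
      using \<open>y \<in> S\<close> unfolding S_def by blast
    show ?thesis unfolding y f' using key[of u v t] uv t ph by simp
  qed
  have z: "0 \<in> S" unfolding S_def by (rule CollectI, rule exI[of _ 0], rule exI[of _ 0]) (simp add: ph f)
  have ne: "S \<noteq> {}" using z by blast
  have bdd: "bdd_above S" using B by (rule bdd_aboveI)
  have up: "Sup S \<le> 18 * (t^2 * ln (1/t))" using B ne by (intro cSup_least) auto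
  have lo: "0 \<le> Sup S" using z bdd by (rule cSup_upper)
  have "dt_modulus2 f \<phi> t = Sup S" unfolding dt_modulus2_def S_def ..
  moreover have "0 \<le> t^2 * ln (1/t)" using lt by simp
  ultimately show ?thesis using up lo by simp
qed

theorem mainTheorem8:
  fixes f \<phi> :: "real \<Rightarrow> real"
  assumes "\<And>x. f x = (if x = 0 then 0 else x * (ln x)\<^sup>2)"
      and "\<And>x. \<phi> x = sqrt (x * (1 - x))"
  shows "(\<lambda>t. dt_modulus2 f \<phi> t) \<in> O[at_right 0](\<lambda>t. t\<^sup>2 * ln (1 / t))"
proof (rule bigoI[where c = 18])
  have "eventually (\<lambda>t::real. 0 < t \<and> t < 1/3) (at_right 0)"
    by (subst eventually_at_right[of 0 "1/3"]) (auto intro!: exI[of _ "1/3"])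
  then show "\<forall>\<^sub>F t in at_right 0. norm (dt_modulus2 f \<phi> t) \<le> 18 * norm (t\<^sup>2 * ln (1 / t))"
    by eventually_elim (use pointwise_bound[OF assms] in auto)
qed

end
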